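(* Let $0<m<1$, $\mu>0$, $f$ smooth, $u_->u_+=0$, $s=\frac{f(u_+)-f(u_-)}{u_+-u_-}$ with $f'(u_+)<s<f'(u_-)$, and let $U$ be a monotonically decreasing viscous shock profile, i.e. $-sU'+f(U)'=\mu(U^m)''$ with $U(-\infty)=u_-$, $U(+\infty)=u_+$. Then there is a constant $C>0$ such that for all $\xi\in\mathbb{R}$, $$|U_\xi(\xi)|\le CU(\xi)^{2-m},\qquad |U_{\xi\xi}(\xi)|\le CU(\xi)^{3-2m}.$$ *)

theory Defs
  imports "HOL-Analysis.Analysis"
begin

definition smooth_fun :: "(real \<Rightarrow> real) \<Rightarrow> bool" where
  "smooth_fun f \<longleftrightarrow> (\<forall>k x. ((deriv ^^ k) f) differentiable (at x))"

end

theory Submission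
  imports Defs
begin

lemma deriv_limit_zero:
  fixes F F' :: "real \<Rightarrow> real"
  assumes d: "\<And>x. (F has_real_derivative F' x) (at x)"
    and l1: "(F \<longlongrightarrow> 0) at_top" and l2: "(F' \<longlongrightarrow> L) at_top"
  shows "L = 0"
proof (rule ccontr)
  assume L: "L \<noteq> 0"
  hence e: "\<bar>L\<bar>/4 > 0" by simp
  have ev1: "eventually (\<lambda>y. dist (F' y) L < \<bar>L\<bar>/4) at_top"
    using l2 e by (rule tendstoD)
  have ev2: "eventually (\<lambda>y. dist (F y) 0 < \<bar>L\<bar>/4) at_top"
    using l1 e by (rule tendstoD)
  from eventually_conj[OF ev1 ev2] obtain X where
    X: "\<And>y. y \<ge> X \<Longrightarrow> dist (F' y) L < \<bar>L\<bar>/4 \<and> dist (F y) 0 < \<bar>L\<bar>/4"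
    unfolding eventually_at_top_linorder by blast
  obtain z where z: "X < z" "z < X + 1" "F (X+1) - F X = ((X+1) - X) * F' z"
    using MVT2[of X "X+1" F F'] d by auto
  have a: "\<bar>F' z - L\<bar> < \<bar>L\<bar>/4" using X[of z] z by (simp add: dist_real_def)
  have b: "\<bar>F (X+1)\<bar> < \<bar>L\<bar>/4" "\<bar>F X\<bar> < \<bar>L\<bar>/4" using X[of X] X[of "X+1"] by (auto simp: dist_real_def)
  have "F' z = F (X+1) - F X" using z by simp
  thus False using a b by linarith
qed

theorem lemma5p1:
  fixes f U :: "real \<Rightarrow> real" and m mu um up s :: real
  assumes m: "0 < m" "m < 1"
    and mu: "mu > 0"
    and f_smooth: "smooth_fun f"
    and states: "um > up" "up = 0"
    and s_def: "s = (f up - f um) / (up - um)"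
    and lax: "deriv f up < s" "s < deriv f um"
    and U_decr: "antimono U"
    and U_diff: "\<And>x. U differentiable (at x)" "\<And>x. deriv U differentiable (at x)"
    and Um_diff: "\<And>x. (\<lambda>y. U y powr m) differentiable (at x)"
                 "\<And>x. deriv (\<lambda>y. U y powr m) differentiable (at x)"
    and ode: "\<And>x. - s * deriv U x + deriv (\<lambda>y. f (U y)) x
                     = mu * deriv (deriv (\<lambda>y. U y powr m)) x"
    and lim_minus: "(U \<longlongrightarrow> um) at_bot"
    and lim_plus: "(U \<longlongrightarrow> up) at_top"
  shows "\<exists>C>0. \<forall>\<xi>. \<bar>deriv U \<xi>\<bar> \<le> C * U \<xi> powr (2 - m)
                 \<and> \<bar>deriv (deriv U) \<xi>\<bar> \<le> C * U \<xi> powr (3 - 2 * m)"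
proof -
  have fD: "\<And>x. (f has_real_derivative deriv f x) (at x)"
  proof -
    fix x
    have "((deriv ^^ 0) f) differentiable (at x)" using f_smooth unfolding smooth_fun_def by blast
    thus "(f has_real_derivative deriv f x) (at x)" by (simp add: DERIV_deriv_iff_real_differentiable)
  qed
  have f'cont: "\<And>x. isCont (deriv f) x"
  proof -
    fix x
    have "((deriv ^^ 1) f) differentiable (at x)" using f_smooth unfolding smooth_fun_def by blast
    hence "deriv f differentiable (at x)" by simp
    thus "isCont (deriv f) x" by (rule differentiable_imp_continuous_within)
  qed
  have UD: "\<And>x. (U has_real_derivative deriv U x) (at x)"
    using U_diff(1) by (simp add: DERIV_deriv_iff_real_differentiable)
  have UD2: "\<And>x. (deriv U has_real_derivative deriv (deriv U) x) (at x)"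
    using U_diff(2) by (simp add: DERIV_deriv_iff_real_differentiable)
  have Ucont: "\<And>x. isCont U x" using UD DERIV_isCont by blast
  have Uge: "\<And>x. 0 \<le> U x"
  proof -
    fix x
    have "eventually (\<lambda>y. U y \<le> U x) at_top"
      unfolding eventually_at_top_linorder
    proof (intro exI allI impI)
      fix y assume "y \<ge> x" thus "U y \<le> U x" by (rule antimonoD[OF U_decr])
    qed
    thus "0 \<le> U x" using tendsto_upperbound[OF lim_plus] states by auto
  qed
  have Ule: "\<And>x. U x \<le> um"
  proof -
    fix x
    have "eventually (\<lambda>y. U x \<le> U y) at_bot"
      unfolding eventually_at_bot_linorder
    proof (intro exI allI impI)
      fix y assume "y \<le> x" thus "U x \<le> U y" by (rule antimonoD[OF U_decr])
    qed
    thus "U x \<le> um" using tendsto_lowerbound[OF lim_minus] by auto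
  qed
  define P where "P = (\<lambda>y. U y powr m)"
  have PD: "\<And>x. (P has_real_derivative deriv P x) (at x)"
    using Um_diff(1) unfolding P_def by (simp add: DERIV_deriv_iff_real_differentiable)
  have PD2: "\<And>x. (deriv P has_real_derivative deriv (deriv P) x) (at x)"
    using Um_diff(2) unfolding P_def by (simp add: DERIV_deriv_iff_real_differentiable)
  have fU: "\<And>x. deriv (\<lambda>y. f (U y)) x = deriv f (U x) * deriv U x"
    by (rule DERIV_imp_deriv) (rule DERIV_chain2[OF fD UD])
  define G where "G = (\<lambda>y. - s * U y + f (U y) - mu * deriv P y)"
  have GD: "\<And>x. (G has_real_derivative 0) (at x)"
  proof -
    fix x
    have "(G has_real_derivative (- s * deriv U x + deriv f (U x) * deriv U x - mu * deriv (deriv P) x)) (at x)"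
      unfolding G_def
      by (intro derivative_intros UD PD2 DERIV_chain2[OF fD UD] DERIV_cmult)
    moreover have "- s * deriv U x + deriv f (U x) * deriv U x - mu * deriv (deriv P) x = 0"
      using ode[of x] fU[of x] unfolding P_def by simp
    ultimately show "(G has_real_derivative 0) (at x)" by simp
  qed
  define K where "K = G 0"
  have GK: "\<And>x. G x = K" unfolding K_def using DERIV_isconst_all GD by blast
  have P'eq: "\<And>x. deriv P x = (- s * U x + f (U x) - K) / mu"
    using GK mu unfolding G_def by (simp add: field_simps)
  have fcont: "\<And>x. isCont f x" using fD DERIV_isCont by blast
  have lim0: "(U \<longlongrightarrow> 0) at_top" using lim_plus states by simp
  have "((\<lambda>x. (- s * U x + f (U x) - K) / mu) \<longlongrightarrow> (- s * 0 + f 0 - K) / mu) at_top"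
    by (intro tendsto_intros lim0 isCont_tendsto_compose[OF fcont]) (use mu in auto)
  moreover have "deriv P = (\<lambda>x. (- s * U x + f (U x) - K) / mu)" using P'eq by auto
  ultimately have l2: "(deriv P \<longlongrightarrow> (f 0 - K) / mu) at_top" by simp
  have l1: "(P \<longlongrightarrow> 0) at_top"
    unfolding P_def by (rule tendsto_zero_powrI[OF lim0]) (use Uge m in auto)
  have "(f 0 - K) / mu = 0" by (rule deriv_limit_zero[OF PD l1 l2])
  hence K0: "K = f 0" using mu by simp
  define h where "h = (\<lambda>u. f u - f 0 - s * u)"
  have Peq: "\<And>x. mu * deriv P x = h (U x)"
    using P'eq K0 mu unfolding h_def by (simp add: field_simps)
  have hD: "\<And>u. (h has_real_derivative (deriv f u - s)) (at u)"
    unfolding h_def by (auto intro!: derivative_eq_intros fD)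
  have "compact ((\<lambda>t. deriv f t - s) ` {0..um})"
    by (intro compact_continuous_image continuous_at_imp_continuous_on)
       (auto intro!: continuous_intros f'cont)
  then obtain A0 where A0: "\<And>t. t \<in> {0..um} \<Longrightarrow> \<bar>deriv f t - s\<bar> \<le> A0"
    by (metis compact_imp_bounded bounded_real image_eqI)
  define A where "A = max A0 0"
  have A: "\<And>t. 0 \<le> t \<Longrightarrow> t \<le> um \<Longrightarrow> \<bar>deriv f t - s\<bar> \<le> A" "A \<ge> 0"
    using A0 unfolding A_def by force+
  have hb: "\<And>u. 0 \<le> u \<Longrightarrow> u \<le> um \<Longrightarrow> \<bar>h u\<bar> \<le> A * u"
  proof -
    fix u :: real assume u: "0 \<le> u" "u \<le> um"
    show "\<bar>h u\<bar> \<le> A * u"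
    proof (cases "u = 0")
      case True thus ?thesis unfolding h_def by simp
    next
      case False
      then obtain z where z: "0 < z" "z < u" "h u - h 0 = (u - 0) * (deriv f z - s)"
        using MVT2[of 0 u h "\<lambda>t. deriv f t - s"] hD u by auto
      have "h 0 = 0" unfolding h_def by simp
      hence "\<bar>h u\<bar> = u * \<bar>deriv f z - s\<bar>" using z u by (simp add: abs_mult)
      also have "\<dots> \<le> u * A" using A(1)[of z] z u by (intro mult_left_mono) auto
      finally show ?thesis by (simp add: mult.commute)
    qed
  qed
  define g where "g = (\<lambda>u. h u * u powr (1 - m) / (m * mu))"
  define g' where "g' = (\<lambda>u. ((deriv f u - s) * u powr (1 - m) + (1 - m) * u powr (1 - m - 1) * h u) / (m * mu))"
  have U'eq: "\<And>x. U x > 0 \<Longrightarrow> deriv U x = g (U x)"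
  proof -
    fix x assume Ux: "U x > 0"
    have "(P has_real_derivative (m * U x powr (m - 1) * deriv U x)) (at x)"
      unfolding P_def using has_real_derivative_powr[OF Ux, of m] UD[of x]
      by (auto intro: DERIV_chain2)
    hence "deriv P x = m * U x powr (m - 1) * deriv U x" by (rule DERIV_imp_deriv)
    hence "h (U x) = mu * m * U x powr (m - 1) * deriv U x" using Peq[of x] by simp
    hence "h (U x) * U x powr (1 - m) = mu * m * (U x powr (m - 1) * U x powr (1 - m)) * deriv U x"
      by simp
    also have "U x powr (m - 1) * U x powr (1 - m) = 1" using Ux by (simp add: powr_add[symmetric])
    finally show "deriv U x = g (U x)" unfolding g_def using m mu by (simp add: field_simps)
  qed
  have U''eq: "\<And>x. U x > 0 \<Longrightarrow> deriv (deriv U) x = g' (U x) * deriv U x"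
  proof -
    fix x assume Ux: "U x > 0"
    have gD: "(g has_real_derivative g' (U x)) (at (U x))"
      unfolding g_def g'_def
      by (intro DERIV_cdivide DERIV_mult hD has_real_derivative_powr[OF Ux])
    have d1: "((\<lambda>y. g (U y)) has_real_derivative g' (U x) * deriv U x) (at x)"
      by (rule DERIV_chain2[OF gD UD])
    have oS: "open {y. U y > 0}"
      by (rule open_Collect_less[OF continuous_on_const]) (simp add: continuous_at_imp_continuous_on Ucont)
    have eqS: "\<And>y. y \<in> {y. U y > 0} \<Longrightarrow> g (U y) = deriv U y" using U'eq by simp
    have xS: "x \<in> {y. U y > 0}" using Ux by simp
    have "(deriv U has_real_derivative g' (U x) * deriv U x) (at x)"
      by (rule has_field_derivative_transform_within_open[OF d1 oS xS eqS])
    thus "deriv (deriv U) x = g' (U x) * deriv U x" by (rule DERIV_imp_deriv)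
  qed
  define B where "B = (A + 1) / (m * mu)"
  have B: "B > 0" unfolding B_def using A m mu by auto
  have main: "\<forall>x. \<bar>deriv U x\<bar> \<le> (B + 2 * B^2) * U x powr (2 - m) \<and>
          \<bar>deriv (deriv U) x\<bar> \<le> (B + 2 * B^2) * U x powr (3 - 2 * m)"
  proof
    fix x
    have zero_min: "\<And>y. U y = 0 \<Longrightarrow> deriv U y = 0"
    proof -
      fix y assume "U y = 0"
      hence "\<forall>z. \<bar>y - z\<bar> < 1 \<longrightarrow> U y \<le> U z" using Uge by simp
      thus "deriv U y = 0" using DERIV_local_min[OF UD[of y]] by (meson zero_less_one)
    qed
    show "\<bar>deriv U x\<bar> \<le> (B + 2 * B^2) * U x powr (2 - m) \<and>
          \<bar>deriv (deriv U) x\<bar> \<le> (B + 2 * B^2) * U x powr (3 - 2 * m)"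
    proof (cases "U x = 0")
      case True
      have z1: "deriv U x = 0" using zero_min True .
      have zr: "\<And>y. y \<ge> x \<Longrightarrow> deriv U y = 0"
      proof -
        fix y assume "y \<ge> x"
        hence "U y \<le> U x" by (rule antimonoD[OF U_decr])
        hence "U y = 0" using Uge[of y] True by simp
        thus "deriv U y = 0" by (rule zero_min)
      qed
      have "(deriv U has_real_derivative deriv (deriv U) x) (at x within {x<..})"
        using UD2[of x] by (rule has_field_derivative_at_within)
      hence t1: "((\<lambda>y. (deriv U y - deriv U x) / (y - x)) \<longlongrightarrow> deriv (deriv U) x) (at_right x)"
        by (simp add: has_field_derivative_iff)
      have "eventually (\<lambda>y. (deriv U y - deriv U x) / (y - x) = 0) (at_right x)"
        unfolding eventually_at_right_less using zr z1 by (auto intro!: eventually_mono[OF eventually_at_right_less[of x]])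
      hence t2: "((\<lambda>y. (deriv U y - deriv U x) / (y - x)) \<longlongrightarrow> 0) (at_right x)"
        by (rule tendsto_eventually)
      have "deriv (deriv U) x = 0"
        using tendsto_unique[OF trivial_limit_at_right_real t1 t2] .
      thus ?thesis using z1 True m by simp
    next
      case False
      define u where "u = U x"
      have u: "0 < u" "u \<le> um" using False Uge[of x] Ule[of x] unfolding u_def by auto
      have hu: "\<bar>h u\<bar> \<le> A * u" using hb u by simp
      have mmu: "m * mu > 0" using m mu by simp
      have e12: "u * u powr (1 - m) = u powr (2 - m)"
      proof -
        have "u powr (2 - m) = u powr (1 + (1 - m))" by simp
        also have "\<dots> = u powr 1 * u powr (1 - m)" by (rule powr_add)
        finally show ?thesis using u by simp
      qed
      have e01: "u powr (1 - m - 1) * u = u powr (1 - m)"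
      proof -
        have "u powr (1 - m) = u powr ((1 - m - 1) + 1)" by simp
        also have "\<dots> = u powr (1 - m - 1) * u powr 1" by (rule powr_add)
        finally show ?thesis using u by simp
      qed
      have e123: "u powr (1 - m) * u powr (2 - m) = u powr (3 - 2 * m)"
      proof -
        have "u powr (3 - 2 * m) = u powr ((1 - m) + (2 - m))" by simp
        also have "\<dots> = u powr (1 - m) * u powr (2 - m)" by (rule powr_add)
        finally show ?thesis by simp
      qed
      have AB: "A / (m * mu) \<le> B" unfolding B_def using mmu by (simp add: divide_right_mono)
      have d1: "deriv U x = h u * u powr (1 - m) / (m * mu)"
        using U'eq[of x] False Uge[of x] unfolding u_def g_def by simp
      have "\<bar>deriv U x\<bar> = \<bar>h u\<bar> * u powr (1 - m) / (m * mu)"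
        using d1 m mu by (simp add: abs_mult)
      also have "\<dots> \<le> (A * u) * u powr (1 - m) / (m * mu)"
        using hu mmu by (intro divide_right_mono mult_right_mono) auto
      also have "\<dots> = A / (m * mu) * u powr (2 - m)" using e12 by (simp add: field_simps)
      also have "\<dots> \<le> B * u powr (2 - m)" using AB by (intro mult_right_mono) auto
      finally have b1: "\<bar>deriv U x\<bar> \<le> B * u powr (2 - m)" .
      define p1 where "p1 = u powr (1 - m)"
      define p2 where "p2 = u powr (2 - m)"
      define p3 where "p3 = u powr (3 - 2 * m)"
      define q where "q = u powr (1 - m - 1)"
      have pos: "p1 \<ge> 0" "p2 \<ge> 0" "p3 \<ge> 0" "q \<ge> 0" unfolding p1_def p2_def p3_def q_def by auto
      have gb1: "\<bar>g' u\<bar> = \<bar>(deriv f u - s) * p1 + (1 - m) * q * h u\<bar> / (m * mu)"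
        unfolding g'_def p1_def q_def using m mu by (simp add: abs_divide)
      have Au: "\<bar>deriv f u - s\<bar> \<le> A" using A(1)[of u] u by simp
      have n1: "\<bar>(deriv f u - s) * p1\<bar> \<le> A * p1"
        using Au pos by (simp add: abs_mult mult_right_mono)
      have "(1 - m) * q \<ge> 0" using m pos by simp
      hence n2: "\<bar>(1 - m) * q * h u\<bar> \<le> (1 - m) * q * (A * u)"
      proof -
        have "\<bar>(1 - m) * q * h u\<bar> = ((1 - m) * q) * \<bar>h u\<bar>"
          using \<open>(1 - m) * q \<ge> 0\<close> by (metis abs_mult abs_of_nonneg)
        also have "\<dots> \<le> (1 - m) * q * (A * u)"
          using hu \<open>(1 - m) * q \<ge> 0\<close> by (rule mult_left_mono)
        finally show ?thesis .
      qed
      have "(1 - m) * q * (A * u) = (1 - m) * A * p1" using e01 unfolding q_def p1_def by (simp add: algebra_simps)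
      also have "\<dots> \<le> A * p1" using m A(2) pos by (simp add: mult_right_mono mult_left_le_one_le)
      finally have n3: "\<bar>(deriv f u - s) * p1 + (1 - m) * q * h u\<bar> \<le> 2 * A * p1"
        using n1 n2 abs_triangle_ineq[of "(deriv f u - s) * p1" "(1 - m) * q * h u"] by linarith
      have "\<bar>g' u\<bar> \<le> 2 * A * p1 / (m * mu)" using gb1 n3 mmu by (simp add: divide_right_mono)
      also have "\<dots> = 2 * p1 * (A / (m * mu))" by simp
      also have "\<dots> \<le> 2 * p1 * B" using AB pos by (intro mult_left_mono) auto
      finally have gb: "\<bar>g' u\<bar> \<le> 2 * B * p1" by (simp add: mult_ac)
      have b1': "\<bar>deriv U x\<bar> \<le> B * p2" using b1 unfolding p2_def .
      have "\<bar>deriv (deriv U) x\<bar> = \<bar>g' u\<bar> * \<bar>deriv U x\<bar>"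
        using U''eq[of x] False Uge[of x] unfolding u_def by (simp add: abs_mult)
      also have "\<dots> \<le> (2 * B * p1) * (B * p2)"
        using gb b1' by (intro mult_mono) auto
      also have "\<dots> = 2 * B^2 * p3" using e123 unfolding p1_def p2_def p3_def
        by (simp add: power2_eq_square algebra_simps)
      also have "\<dots> \<le> (B + 2 * B^2) * p3" using B pos by (intro mult_right_mono) auto
      finally have r2: "\<bar>deriv (deriv U) x\<bar> \<le> (B + 2 * B^2) * p3" .
      have "B * p2 \<le> (B + 2 * B^2) * p2" using B pos by (intro mult_right_mono) auto
      hence r1: "\<bar>deriv U x\<bar> \<le> (B + 2 * B^2) * p2" using b1' by linarith
      show ?thesis using r1 r2 unfolding p2_def p3_def u_def by simp
    qed
  qed
  have "B + 2 * B^2 > 0" using B by (simp add: add_pos_nonneg)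
  with main show ?thesis by blast
qed
end
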